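(* Let $k$ be a positive integer and let $G$ be a $2k$-connected $(P_2\cup kP_1)$-free graph. Let $u,v$ be distinct vertices of $G$, let $P$ be a longest $(u,v)$-path in $G$, oriented from $u$ to $v$, and suppose $V(P)\neq V(G)$. Let $x\in V(G)\setminus V(P)$ and write $N_P(x)=\{x_1,\dots,x_t\}$, where $x_1,\dots,x_t$ appear on $P$ in this order from $u$ to $v$. Fix $i\in\{1,\dots,t-1\}$, let $S_i$ be the set of vertices of $P$ strictly between $x_i$ and $x_{i+1}$, and let $X\subseteq N_P(x)^+$ be any set with $x_i^+\in X$ and $|X|=2k-1$. Then for every integer $j$ with $1\le j\le |S_i|$: if $j$ is odd then $N_P(x_i^{+j})\cap X=\emptyset$, and if $j$ is even then $|N_P(x_i^{+j})\cap X|\ge k+1$.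
   Context: All graphs are finite and simple. For a graph $H$, a graph $G$ is $H$-free if $G$ contains no induced subgraph isomorphic to $H$; $P_2\cup kP_1$ is the disjoint union of an edge and $k$ isolated vertices. A $(u,v)$-path is a path with endpoints $u$ and $v$. $N_P(y)$ is the set of neighbors of $y$ lying on $P$. For a vertex $w$ of the oriented path $P$, $w^{+}$ (also $w^{+1}$) is its successor and $w^{-}$ (also $w^{-1}$) its predecessor on $P$, and $w^{+\ell}$, $w^{-\ell}$ denote the successor of $w^{+(\ell-1)}$, resp. predecessor of $w^{-(\ell-1)}$. For $S\subseteq V(P)$, $S^+=\{w^+: w\in S\setminus\{v\}\}$. (Under the hypotheses, $|N_P(x)^+|\ge 2k-1$, so such $X$ exists.) *)

theory Defs
  imports Main
begin

definition simple_graph :: "'a set \<Rightarrow> ('a \<Rightarrow> 'a \<Rightarrow> bool) \<Rightarrow> bool" where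
  "simple_graph V E \<longleftrightarrow> finite V \<and>
     (\<forall>x y. E x y \<longrightarrow> x \<in> V \<and> y \<in> V \<and> x \<noteq> y \<and> E y x)"

definition connected_on :: "('a \<Rightarrow> 'a \<Rightarrow> bool) \<Rightarrow> 'a set \<Rightarrow> bool" where
  "connected_on E S \<longleftrightarrow>
     (\<forall>a\<in>S. \<forall>b\<in>S. (\<lambda>x y. E x y \<and> x \<in> S \<and> y \<in> S)\<^sup>*\<^sup>* a b)"

definition k_connected :: "'a set \<Rightarrow> ('a \<Rightarrow> 'a \<Rightarrow> bool) \<Rightarrow> nat \<Rightarrow> bool" where
  "k_connected V E m \<longleftrightarrow> card V > m \<and>
     (\<forall>S \<subseteq> V. card S < m \<longrightarrow> connected_on E (V - S))"

definition P2_kP1_free :: "'a set \<Rightarrow> ('a \<Rightarrow> 'a \<Rightarrow> bool) \<Rightarrow> nat \<Rightarrow> bool" where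
  "P2_kP1_free V E k \<longleftrightarrow>
     \<not> (\<exists>a b I. a \<in> V \<and> b \<in> V \<and> I \<subseteq> V \<and> card I = k \<and> a \<notin> I \<and> b \<notin> I \<and> E a b \<and>
          (\<forall>y\<in>I. \<forall>z\<in>I. \<not> E y z) \<and> (\<forall>y\<in>I. \<not> E a y \<and> \<not> E b y))"

definition is_path :: "'a set \<Rightarrow> ('a \<Rightarrow> 'a \<Rightarrow> bool) \<Rightarrow> 'a list \<Rightarrow> bool" where
  "is_path V E P \<longleftrightarrow> P \<noteq> [] \<and> distinct P \<and> set P \<subseteq> V \<and>
     (\<forall>i. Suc i < length P \<longrightarrow> E (P ! i) (P ! Suc i))"

definition uv_path :: "'a set \<Rightarrow> ('a \<Rightarrow> 'a \<Rightarrow> bool) \<Rightarrow> 'a \<Rightarrow> 'a \<Rightarrow> 'a list \<Rightarrow> bool" where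
  "uv_path V E u v P \<longleftrightarrow> is_path V E P \<and> hd P = u \<and> last P = v"

definition longest_uv_path :: "'a set \<Rightarrow> ('a \<Rightarrow> 'a \<Rightarrow> bool) \<Rightarrow> 'a \<Rightarrow> 'a \<Rightarrow> 'a list \<Rightarrow> bool" where
  "longest_uv_path V E u v P \<longleftrightarrow> uv_path V E u v P \<and>
     (\<forall>Q. uv_path V E u v Q \<longrightarrow> length Q \<le> length P)"

definition nbrP :: "('a \<Rightarrow> 'a \<Rightarrow> bool) \<Rightarrow> 'a list \<Rightarrow> 'a \<Rightarrow> 'a set" where
  "nbrP E P y = {w \<in> set P. E y w}"

definition succ_set :: "'a list \<Rightarrow> 'a set \<Rightarrow> 'a set" where
  "succ_set P S = {P ! Suc m | m. Suc m < length P \<and> P ! m \<in> S}"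

end

theory Submission
  imports Defs
begin


definition walkE :: "('a \<Rightarrow> 'a \<Rightarrow> bool) \<Rightarrow> 'a list \<Rightarrow> bool" where
  "walkE E xs \<longleftrightarrow> (\<forall>i. Suc i < length xs \<longrightarrow> E (xs ! i) (xs ! Suc i))"

lemma walk_single[simp]: "walkE E [a]"
  by (simp add: walkE_def)

lemma walk_append:
  assumes "xs \<noteq> []" "ys \<noteq> []" "walkE E xs" "walkE E ys" "E (last xs) (hd ys)"
  shows "walkE E (xs @ ys)"
  unfolding walkE_def
proof (intro allI impI)
  fix i assume i: "Suc i < length (xs @ ys)"
  consider "Suc i < length xs" | "Suc i = length xs" | "Suc i > length xs" by linarith
  then show "E ((xs @ ys) ! i) ((xs @ ys) ! Suc i)"
  proof cases
    case 1 then show ?thesis using assms(3) by (simp add: walkE_def nth_append)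
  next
    case 2
    then have "i = length xs - 1" by auto
    then show ?thesis using 2 assms(1,2,5)
      by (simp add: nth_append last_conv_nth hd_conv_nth)
  next
    case 3
    then have "Suc (i - length xs) < length ys" using i by auto
    then have "E (ys ! (i - length xs)) (ys ! Suc (i - length xs))" using assms(4) by (simp add: walkE_def)
    moreover have "Suc i - length xs = Suc (i - length xs)" using 3 by auto
    ultimately show ?thesis using 3 by (simp add: nth_append)
  qed
qed

lemma walk_rev:
  assumes "\<And>a b. E a b \<Longrightarrow> E b a" "walkE E xs"
  shows "walkE E (rev xs)"
  unfolding walkE_def
proof (intro allI impI)
  fix i assume i: "Suc i < length (rev xs)"
  let ?l = "length xs"
  have "E (xs ! (?l - Suc (Suc i))) (xs ! Suc (?l - Suc (Suc i)))"
    using assms(2) i by (simp add: walkE_def)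
  moreover have "Suc (?l - Suc (Suc i)) = ?l - Suc i" using i by auto
  ultimately show "E (rev xs ! i) (rev xs ! Suc i)" using i assms(1)
    by (simp add: rev_nth)
qed

definition seg :: "'a list \<Rightarrow> nat \<Rightarrow> nat \<Rightarrow> 'a list" where
  "seg P i j = map ((!) P) [i..<Suc j]"

lemma seg_ne[simp]: "i \<le> j \<Longrightarrow> seg P i j \<noteq> []"
  by (simp add: seg_def del: upt_Suc)

lemma seg_hd[simp]: "i \<le> j \<Longrightarrow> hd (seg P i j) = P ! i"
  by (simp add: seg_def hd_map del: upt_Suc)

lemma seg_last[simp]: "i \<le> j \<Longrightarrow> last (seg P i j) = P ! j"
  by (simp add: seg_def last_map)

lemma seg_len[simp]: "length (seg P i j) = Suc j - i"
  by (simp add: seg_def del: upt_Suc)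

lemma seg_set: "set (seg P i j) = {P ! m | m. i \<le> m \<and> m \<le> j}"
  by (auto simp add: seg_def)

lemma seg_setP: "j < length P \<Longrightarrow> set (seg P i j) \<subseteq> set P"
  by (auto simp add: seg_def)

lemma seg_distinct: "distinct P \<Longrightarrow> j < length P \<Longrightarrow> distinct (seg P i j)"
  by (auto simp add: seg_def distinct_map inj_on_def nth_eq_iff_index_eq)

lemma seg_walk: "walkE E P \<Longrightarrow> j < length P \<Longrightarrow> walkE E (seg P i j)"
  by (auto simp add: seg_def walkE_def simp del: upt_Suc)

lemma seg_disj: "distinct P \<Longrightarrow> j < i' \<Longrightarrow> j' < length P \<Longrightarrow>
   set (seg P i j) \<inter> set (seg P i' j') = {}"
  by (auto simp add: seg_set nth_eq_iff_index_eq)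



lemma walk_Cons: "ys \<noteq> [] \<Longrightarrow> E a (hd ys) \<Longrightarrow> walkE E ys \<Longrightarrow> walkE E (a # ys)"
  using walk_append[of "[a]" ys E] by simp

locale lp =
  fixes V :: "'a set" and E :: "'a \<Rightarrow> 'a \<Rightarrow> bool" and P :: "'a list" and x :: 'a
  assumes sym: "\<And>a b. E a b \<Longrightarrow> E b a"
    and dist: "distinct P" and walk: "walkE E P" and PV: "set P \<subseteq> V"
    and xV: "x \<in> V" and xP: "x \<notin> set P"
    and maxi: "\<And>Q. Q \<noteq> [] \<Longrightarrow> distinct Q \<Longrightarrow> set Q \<subseteq> V \<Longrightarrow> walkE E Q \<Longrightarrow>
         hd Q = P ! 0 \<Longrightarrow> last Q = P ! (length P - 1) \<Longrightarrow> length Q \<le> length P"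
begin

lemma segV: "j < length P \<Longrightarrow> set (seg P i j) \<subseteq> V"
  using seg_setP PV by blast

lemma segx: "j < length P \<Longrightarrow> x \<notin> set (seg P i j)"
  using seg_setP xP by blast

lemma sw: "j < length P \<Longrightarrow> walkE E (seg P i j)"
  using seg_walk walk by blast

lemma sd: "j < length P \<Longrightarrow> distinct (seg P i j)"
  using seg_distinct dist by blast

lemma ins:
  assumes "Suc t < length P" "E x (P ! t)"
  shows "\<not> E x (P ! Suc t)"
proof
  assume e: "E x (P ! Suc t)"
  define n where "n = length P"
  have n: "Suc t < n" "t < length P" "n - 1 < length P" using assms n_def by auto
  define Q where "Q = seg P 0 t @ x # seg P (Suc t) (n - 1)"
  have D0: "set (seg P (0) (t)) \<inter> set (seg P (Suc t) (n-1)) = {}"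
    using n assms by (intro seg_disj[OF dist]) auto
  have d: "distinct Q" unfolding Q_def using n
    using D0 by (auto simp: sd segx)
  have s: "set Q \<subseteq> V" unfolding Q_def using n assms by (simp add: xV; intro conjI segV; linarith)
  have w: "walkE E Q" unfolding Q_def
    using n assms e sym
    by (auto intro!: walk_append walk_Cons sw)
  have "length Q \<le> length P"
    by (rule maxi[OF _ d s w]) (use n n_def in \<open>auto simp: Q_def\<close>)
  then show False using n n_def by (simp add: Q_def)
qed

lemma cross:
  assumes "t1 < t2" "Suc t2 < length P" "E x (P ! t1)" "E x (P ! t2)"
  shows "\<not> E (P ! Suc t1) (P ! Suc t2)"
proof
  assume e: "E (P ! Suc t1) (P ! Suc t2)"
  define n where "n = length P"
  have n: "Suc t2 < n" "t2 < length P" "n - 1 < length P" using assms n_def by auto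
  define Q where "Q = seg P 0 t1 @ x # rev (seg P (Suc t1) t2) @ seg P (Suc t2) (n - 1)"
  have D0: "set (seg P (0) (t1)) \<inter> set (seg P (Suc t1) (t2)) = {}"
    using n assms by (intro seg_disj[OF dist]) auto
  have D1: "set (seg P (0) (t1)) \<inter> set (seg P (Suc t2) (n-1)) = {}"
    using n assms by (intro seg_disj[OF dist]) auto
  have D2: "set (seg P (Suc t1) (t2)) \<inter> set (seg P (Suc t2) (n-1)) = {}"
    using n assms by (intro seg_disj[OF dist]) auto
  have d: "distinct Q" unfolding Q_def using n assms
    using D0 D1 D2 by (auto simp: sd segx)
  have s: "set Q \<subseteq> V" unfolding Q_def using n assms by (simp add: xV; intro conjI segV; linarith)
  have w: "walkE E Q" unfolding Q_def
    using n assms e sym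
    by (auto intro!: walk_append walk_Cons sw walk_rev simp: hd_rev last_rev)
  have "length Q \<le> length P"
    by (rule maxi[OF _ d s w]) (use n n_def in \<open>auto simp: Q_def\<close>)
  then show False using n n_def assms by (simp add: Q_def)
qed

lemma high:
  assumes "0 < m" "m \<le> s" "s < r" "Suc r < length P" "E x (P ! s)" "E x (P ! r)"
    "E (P ! (m - 1)) (P ! Suc s)" "E (P ! m) (P ! Suc r)"
  shows False
proof -
  define n where "n = length P"
  have n: "Suc r < n" "r < length P" "n - 1 < length P" using assms n_def by auto
  define Q where "Q = seg P 0 (m - 1) @ seg P (Suc s) r @ x # rev (seg P m s) @ seg P (Suc r) (n - 1)"
  have D0: "set (seg P (0) (m - 1)) \<inter> set (seg P (Suc s) (r)) = {}"
    using n assms by (intro seg_disj[OF dist]) auto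
  have D1: "set (seg P (0) (m - 1)) \<inter> set (seg P (m) (s)) = {}"
    using n assms by (intro seg_disj[OF dist]) auto
  have D2: "set (seg P (0) (m - 1)) \<inter> set (seg P (Suc r) (n-1)) = {}"
    using n assms by (intro seg_disj[OF dist]) auto
  have D3: "set (seg P (m) (s)) \<inter> set (seg P (Suc s) (r)) = {}"
    using n assms by (intro seg_disj[OF dist]) auto
  have D4: "set (seg P (Suc s) (r)) \<inter> set (seg P (Suc r) (n-1)) = {}"
    using n assms by (intro seg_disj[OF dist]) auto
  have D5: "set (seg P (m) (s)) \<inter> set (seg P (Suc r) (n-1)) = {}"
    using n assms by (intro seg_disj[OF dist]) auto
  have d: "distinct Q" unfolding Q_def using n assms
    using D0 D1 D2 D3 D4 D5 by (auto simp: sd segx)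
  have s: "set Q \<subseteq> V" unfolding Q_def using n assms by (simp add: xV; intro conjI segV; linarith)
  have w: "walkE E Q" unfolding Q_def
    using n assms sym
    by (auto intro!: walk_append walk_Cons sw walk_rev simp: hd_rev last_rev)
  have "length Q \<le> length P"
    by (rule maxi[OF _ d s w]) (use n n_def assms in \<open>auto simp: Q_def\<close>)
  then show False using n n_def assms by (simp add: Q_def)
qed

lemma low:
  assumes "r < s" "Suc s \<le> m - 1" "m < length P" "E x (P ! r)" "E x (P ! s)"
    "E (P ! (m - 1)) (P ! Suc r)" "E (P ! m) (P ! Suc s)"
  shows False
proof -
  define n where "n = length P"
  have n: "m < n" "m < length P" "n - 1 < length P" using assms n_def by auto
  define Q where "Q = seg P 0 r @ x # rev (seg P (Suc r) s) @ rev (seg P (Suc s) (m - 1)) @ seg P m (n - 1)"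
  have D0: "set (seg P (0) (r)) \<inter> set (seg P (Suc r) (s)) = {}"
    using n assms by (intro seg_disj[OF dist]) auto
  have D1: "set (seg P (0) (r)) \<inter> set (seg P (Suc s) (m - 1)) = {}"
    using n assms by (intro seg_disj[OF dist]) auto
  have D2: "set (seg P (0) (r)) \<inter> set (seg P (m) (n-1)) = {}"
    using n assms by (intro seg_disj[OF dist]) auto
  have D3: "set (seg P (Suc r) (s)) \<inter> set (seg P (Suc s) (m - 1)) = {}"
    using n assms by (intro seg_disj[OF dist]) auto
  have D4: "set (seg P (Suc r) (s)) \<inter> set (seg P (m) (n - 1)) = {}"
    using n assms by (intro seg_disj[OF dist]) auto
  have D5: "set (seg P (Suc s) (m - 1)) \<inter> set (seg P (m) (n-1)) = {}"
    using n assms by (intro seg_disj[OF dist]) auto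
  have d: "distinct Q" unfolding Q_def using n assms
    using D0 D1 D2 D3 D4 D5 by (auto simp: sd segx)
  have s: "set Q \<subseteq> V" unfolding Q_def using n assms by (simp add: xV; intro conjI segV; linarith)
  have w: "walkE E Q" unfolding Q_def
    using n assms sym
    by (auto intro!: walk_append walk_Cons sw walk_rev simp: hd_rev last_rev)
  have "length Q \<le> length P"
    by (rule maxi[OF _ d s w]) (use n n_def assms in \<open>auto simp: Q_def\<close>)
  then show False using n n_def assms by (simp add: Q_def)
qed

lemma mixed:
  assumes "Suc s \<le> m - 1" "m \<le> r" "Suc r < length P" "E x (P ! s)" "E x (P ! r)"
    "E (P ! m) (P ! Suc s)" "E (P ! (m - 1)) (P ! Suc r)"
  shows False
proof -
  define n where "n = length P"
  have n: "Suc r < n" "r < length P" "n - 1 < length P" using assms n_def by auto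
  define Q where "Q = seg P 0 s @ x # rev (seg P m r) @ seg P (Suc s) (m - 1) @ seg P (Suc r) (n - 1)"
  have D0: "set (seg P (0) (s)) \<inter> set (seg P (m) (r)) = {}"
    using n assms by (intro seg_disj[OF dist]) auto
  have D1: "set (seg P (0) (s)) \<inter> set (seg P (Suc s) (m - 1)) = {}"
    using n assms by (intro seg_disj[OF dist]) auto
  have D2: "set (seg P (0) (s)) \<inter> set (seg P (Suc r) (n-1)) = {}"
    using n assms by (intro seg_disj[OF dist]) auto
  have D3: "set (seg P (Suc s) (m - 1)) \<inter> set (seg P (m) (r)) = {}"
    using n assms by (intro seg_disj[OF dist]) auto
  have D4: "set (seg P (m) (r)) \<inter> set (seg P (Suc r) (n - 1)) = {}"
    using n assms by (intro seg_disj[OF dist]) auto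
  have D5: "set (seg P (Suc s) (m - 1)) \<inter> set (seg P (Suc r) (n-1)) = {}"
    using n assms by (intro seg_disj[OF dist]) auto
  have d: "distinct Q" unfolding Q_def using n assms
    using D0 D1 D2 D3 D4 D5 by (auto simp: sd segx)
  have s: "set Q \<subseteq> V" unfolding Q_def using n assms by (simp add: xV; intro conjI segV; linarith)
  have w: "walkE E Q" unfolding Q_def
    using n assms sym
    by (auto intro!: walk_append walk_Cons sw walk_rev simp: hd_rev last_rev)
  have "length Q \<le> length P"
    by (rule maxi[OF _ d s w]) (use n n_def assms in \<open>auto simp: Q_def\<close>)
  then show False using n n_def assms by (simp add: Q_def)
qed

end


theorem mainTheorem5:
  fixes V :: "'a set" and E :: "'a \<Rightarrow> 'a \<Rightarrow> bool" and k :: nat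
    and u v x :: 'a and P :: "'a list" and X :: "'a set" and p q :: nat
  assumes "k > 0"
    and "simple_graph V E"
    and "k_connected V E (2 * k)"
    and "P2_kP1_free V E k"
    and "u \<in> V" and "v \<in> V" and "u \<noteq> v"
    and "longest_uv_path V E u v P"
    and "set P \<noteq> V"
    and "x \<in> V - set P"
    \<comment> \<open>x_i = P!p and x_{i+1} = P!q are consecutive elements of N_P(x) along P\<close>
    and "p < q" and "q < length P"
    and "P ! p \<in> nbrP E P x" and "P ! q \<in> nbrP E P x"
    and "\<forall>m. p < m \<and> m < q \<longrightarrow> P ! m \<notin> nbrP E P x"
    and "X \<subseteq> succ_set P (nbrP E P x)"
    and "P ! Suc p \<in> X"
    and "card X = 2 * k - 1"
  shows "\<forall>j. 1 \<le> j \<and> j \<le> q - p - 1 \<longrightarrow>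
           (odd j \<longrightarrow> nbrP E P (P ! (p + j)) \<inter> X = {}) \<and>
           (even j \<longrightarrow> card (nbrP E P (P ! (p + j)) \<inter> X) \<ge> k + 1)"
proof -
  have Ewf: "\<And>a b. E a b \<Longrightarrow> a \<in> V \<and> b \<in> V \<and> a \<noteq> b \<and> E b a"
    using assms(2) unfolding simple_graph_def by blast
  have sym: "\<And>a b. E a b \<Longrightarrow> E b a" using Ewf by blast
  have irr: "\<And>a. \<not> E a a" using Ewf by blast
  have up: "uv_path V E u v P" and mx: "\<And>Q. uv_path V E u v Q \<Longrightarrow> length Q \<le> length P"
    using assms(8) unfolding longest_uv_path_def by auto
  have Pne: "P \<noteq> []" and dist: "distinct P" and PV: "set P \<subseteq> V" and walk: "walkE E P"
    and hdP: "hd P = u" and lastP: "last P = v"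
    using up unfolding uv_path_def is_path_def walkE_def by auto
  have xV: "x \<in> V" and xP: "x \<notin> set P" using assms(10) by auto
  interpret L: lp V E P x
  proof
    show "\<And>a b. E a b \<Longrightarrow> E b a" by (rule sym)
    fix Q :: "'a list"
    assume "Q \<noteq> []" "distinct Q" "set Q \<subseteq> V" "walkE E Q" "hd Q = P ! 0"
      "last Q = P ! (length P - 1)"
    then have "uv_path V E u v Q" using hdP lastP Pne
      unfolding uv_path_def is_path_def walkE_def by (simp add: hd_conv_nth last_conv_nth)
    then show "length Q \<le> length P" by (rule mx)
  qed (use dist walk PV xV xP in auto)
  have nbr: "\<And>y w. w \<in> nbrP E P y \<longleftrightarrow> w \<in> set P \<and> E y w" unfolding nbrP_def by auto
  have Xform: "\<And>z. z \<in> X \<Longrightarrow> \<exists>t. Suc t < length P \<and> E x (P ! t) \<and> z = P ! Suc t"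
  proof -
    fix z assume "z \<in> X"
    then have "z \<in> succ_set P (nbrP E P x)" using assms(16) by blast
    then obtain m where "Suc m < length P" "P ! m \<in> nbrP E P x" "z = P ! Suc m"
      unfolding succ_set_def by blast
    then show "\<exists>t. Suc t < length P \<and> E x (P ! t) \<and> z = P ! Suc t" using nbr by blast
  qed
  have XP: "X \<subseteq> set P" using Xform by force
  have finX: "finite X" using XP finite_subset by blast
  have XV: "X \<subseteq> V" using XP PV by blast
  have I1: "\<And>z. z \<in> X \<Longrightarrow> \<not> E x z" using Xform L.ins by blast
  have I2: "\<And>z1 z2. z1 \<in> X \<Longrightarrow> z2 \<in> X \<Longrightarrow> \<not> E z1 z2"
  proof -
    fix z1 z2 assume z: "z1 \<in> X" "z2 \<in> X"
    obtain t1 where t1: "Suc t1 < length P" "E x (P ! t1)" "z1 = P ! Suc t1" using Xform z by blast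
    obtain t2 where t2: "Suc t2 < length P" "E x (P ! t2)" "z2 = P ! Suc t2" using Xform z by blast
    consider "t1 = t2" | "t1 < t2" | "t2 < t1" by linarith
    then show "\<not> E z1 z2"
    proof cases
      case 1 then show ?thesis using t1 t2 irr by simp
    next
      case 2 then show ?thesis using t1 t2 L.cross by blast
    next
      case 3 then show ?thesis using t1 t2 L.cross sym by blast
    qed
  qed
  have side: "\<And>t. t < length P \<Longrightarrow> E x (P ! t) \<Longrightarrow> t \<le> p \<or> q \<le> t"
  proof (rule ccontr)
    fix t assume "t < length P" "E x (P ! t)" "\<not> (t \<le> p \<or> q \<le> t)"
    then have h: "t < length P" "E x (P ! t)" "p < t" "t < q" by auto
    then have "P ! t \<notin> nbrP E P x" using assms(15) by blast
    moreover have "P ! t \<in> nbrP E P x" using nbr h nth_mem by blast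
    ultimately show False by blast
  qed
  have intx: "\<And>m. p < m \<Longrightarrow> m < q \<Longrightarrow> \<not> E x (P ! m)"
  proof
    fix m assume h: "p < m" "m < q" "E x (P ! m)"
    then have "P ! m \<notin> nbrP E P x" using assms(15) by blast
    moreover have "m < length P" using h assms(12) by linarith
    then have "P ! m \<in> nbrP E P x" using nbr h nth_mem by blast
    ultimately show False by blast
  qed
  have intX: "\<And>m. Suc p < m \<Longrightarrow> m < q \<Longrightarrow> P ! m \<notin> X"
  proof
    fix m assume m: "Suc p < m" "m < q" "P ! m \<in> X"
    obtain t where t: "Suc t < length P" "E x (P ! t)" "P ! m = P ! Suc t" using Xform m by blast
    have "m = Suc t" using t dist m assms(12) by (simp add: nth_eq_iff_index_eq)
    then show False using side[of t] t m by auto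
  qed
  have free: "\<And>a b I. a \<in> V \<Longrightarrow> b \<in> V \<Longrightarrow> E a b \<Longrightarrow> I \<subseteq> V \<Longrightarrow> a \<notin> I \<Longrightarrow> b \<notin> I \<Longrightarrow>
     (\<forall>y\<in>I. \<forall>z\<in>I. \<not> E y z) \<Longrightarrow> (\<forall>y\<in>I. \<not> E a y \<and> \<not> E b y) \<Longrightarrow> card I < k"
  proof (rule ccontr)
    fix a b I assume h: "a \<in> V" "b \<in> V" "E a b" "I \<subseteq> V" "a \<notin> I" "b \<notin> I"
      "\<forall>y\<in>I. \<forall>z\<in>I. \<not> E y z" "\<forall>y\<in>I. \<not> E a y \<and> \<not> E b y" "\<not> card I < k"
    have "finite I" using h(4) assms(2) finite_subset unfolding simple_graph_def by blast
    then obtain J where J: "J \<subseteq> I" "card J = k" using h(9) obtain_subset_with_card_n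
      by (metis not_less)
    have "\<exists>a b I. a \<in> V \<and> b \<in> V \<and> I \<subseteq> V \<and> card I = k \<and> a \<notin> I \<and> b \<notin> I \<and> E a b \<and>
          (\<forall>y\<in>I. \<forall>z\<in>I. \<not> E y z) \<and> (\<forall>y\<in>I. \<not> E a y \<and> \<not> E b y)"
      by (rule exI[of _ a], rule exI[of _ b], rule exI[of _ J]) (use h J in blast)
    then show False using assms(4) unfolding P2_kP1_free_def by blast
  qed
  have indep: "\<And>y z. y \<in> X \<union> {x} \<Longrightarrow> z \<in> X \<union> {x} \<Longrightarrow> \<not> E y z"
    using I1 I2 irr sym by blast
  have cXx: "card (X \<union> {x}) = 2 * k"
  proof -
    have "x \<notin> X" using XP xP by blast
    then show ?thesis using finX assms(18) assms(1) by simp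
  qed
  have claim: "\<And>j. 1 \<le> j \<Longrightarrow> j \<le> q - p - 1 \<Longrightarrow>
     (odd j \<longrightarrow> (\<forall>w\<in>X. \<not> E (P ! (p + j)) w)) \<and>
     (even j \<longrightarrow> k + 1 \<le> card {w\<in>X. E (P ! (p + j)) w})"
  proof -
    fix j show "1 \<le> j \<Longrightarrow> j \<le> q - p - 1 \<Longrightarrow>
     (odd j \<longrightarrow> (\<forall>w\<in>X. \<not> E (P ! (p + j)) w)) \<and>
     (even j \<longrightarrow> k + 1 \<le> card {w\<in>X. E (P ! (p + j)) w})"
    proof (induction j)
      case 0 then show ?case by simp
    next
      case (Suc j)
      show ?case
      proof (cases "j = 0")
        case True
        then show ?thesis using I2 assms(17) by simp
      next
        case False
        then have IH: "(odd j \<longrightarrow> (\<forall>w\<in>X. \<not> E (P ! (p + j)) w)) \<and>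
           (even j \<longrightarrow> k + 1 \<le> card {w\<in>X. E (P ! (p + j)) w})"
          using Suc by simp
        define a where "a = P ! (p + j)"
        define bb where "bb = P ! (p + Suc j)"
        have bnd: "p + Suc j < q" "Suc (p + j) < length P" using Suc.prems assms(11,12) by auto
        have eab: "E a bb" using walk bnd unfolding walkE_def a_def bb_def by simp
        have aV: "a \<in> V" and bV: "bb \<in> V" using Ewf eab by auto
        have bx: "\<not> E x bb" "\<not> E bb x" using intx[of "p + Suc j"] bnd sym unfolding bb_def by auto
        have ax: "\<not> E x a" "\<not> E a x" using intx[of "p + j"] bnd sym False unfolding a_def by auto
        have bX: "bb \<notin> X" using intX[of "p + Suc j"] bnd False unfolding bb_def by auto
        have bnx: "bb \<noteq> x" using xP bnd unfolding bb_def by auto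
        have anx: "a \<noteq> x" using xP bnd unfolding a_def by auto
        show ?thesis
        proof (cases "even (Suc j)")
          case True
          then have oj: "odd j" by simp
          define pool where "pool = (X \<union> {x}) - {w. E bb w \<or> w = a}"
          have nadj: "\<forall>y\<in>pool. \<not> E a y \<and> \<not> E bb y"
          proof
            fix y assume y: "y \<in> pool"
            show "\<not> E a y \<and> \<not> E bb y"
            proof (cases "j = 1")
              case True
              then have "a \<in> X" using assms(17) unfolding a_def by simp
              then show ?thesis using y indep unfolding pool_def by auto
            next
              case False
              then have "\<forall>w\<in>X. \<not> E a w" using IH oj unfolding a_def by simp
              then show ?thesis using y ax unfolding pool_def by auto
            qed
          qed
          have "card pool < k"
            by (rule free[OF aV bV eab]) (use nadj indep XV xV bnx bX in \<open>auto simp: pool_def\<close>)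
          moreover have "X \<union> {x} \<subseteq> pool \<union> {w\<in>X. E bb w}"
            using bx anx sym eab unfolding pool_def by auto
          then have "card (X \<union> {x}) \<le> card pool + card {w\<in>X. E bb w}"
            proof -
              have "card (X \<union> {x}) \<le> card (pool \<union> {w\<in>X. E bb w})"
                by (intro card_mono) (use finX \<open>X \<union> {x} \<subseteq> pool \<union> {w\<in>X. E bb w}\<close> in \<open>auto simp: pool_def\<close>)
              also have "\<dots> \<le> card pool + card {w\<in>X. E bb w}" by (rule card_Un_le)
              finally show ?thesis .
            qed
          ultimately have "k + 1 \<le> card {w\<in>X. E bb w}" using cXx by linarith
          then show ?thesis using True unfolding bb_def by simp
        next
          case False
          then have ej: "even j" by simp
          have Na: "k + 1 \<le> card {w\<in>X. E a w}" using IH ej unfolding a_def by simp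
          have "\<forall>w\<in>X. \<not> E bb w"
          proof (rule ccontr)
            assume "\<not> (\<forall>w\<in>X. \<not> E bb w)"
            then obtain z where z: "z \<in> X" "E bb z" by blast
            define pool where "pool = (X \<union> {x}) - {w. E bb w}"
            have zV: "z \<in> V" using z XV by blast
            have "card pool < k"
              by (rule free[OF bV zV z(2)]) (use indep XV xV bX bnx z irr in \<open>auto simp: pool_def\<close>)
            moreover have "X \<union> {x} \<subseteq> pool \<union> {w\<in>X. E bb w}"
              using bx unfolding pool_def by auto
            then have "card (X \<union> {x}) \<le> card pool + card {w\<in>X. E bb w}"
              proof -
              have "card (X \<union> {x}) \<le> card (pool \<union> {w\<in>X. E bb w})"
                by (intro card_mono) (use finX \<open>X \<union> {x} \<subseteq> pool \<union> {w\<in>X. E bb w}\<close> in \<open>auto simp: pool_def\<close>)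
              also have "\<dots> \<le> card pool + card {w\<in>X. E bb w}" by (rule card_Un_le)
              finally show ?thesis .
            qed
            ultimately have Nb: "k + 1 \<le> card {w\<in>X. E bb w}" using cXx by linarith
            let ?A = "{w\<in>X. E a w}" and ?B = "{w\<in>X. E bb w}"
            have "card (?A \<union> ?B) \<le> card X" by (rule card_mono[OF finX]) auto
            moreover have "card ?A + card ?B = card (?A \<union> ?B) + card (?A \<inter> ?B)"
              by (rule card_Un_Int) (use finX in auto)
            ultimately have c2: "2 \<le> card (?A \<inter> ?B)" using Na Nb assms(18) by linarith
            have ne: "?A \<inter> ?B \<noteq> {}" using c2 by (cases "?A \<inter> ?B = {}") auto
            then obtain z1 where z1: "z1 \<in> ?A \<inter> ?B" by blast
            have "card (?A \<inter> ?B - {z1}) \<ge> 1" using c2 z1 finX by simp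
            then have "?A \<inter> ?B - {z1} \<noteq> {}" by (cases "?A \<inter> ?B - {z1} = {}") auto
            then obtain z2 where z2: "z2 \<in> ?A \<inter> ?B" "z2 \<noteq> z1" by blast
            obtain t1 where t1: "Suc t1 < length P" "E x (P ! t1)" "z1 = P ! Suc t1" using Xform z1 by blast
            obtain t2 where t2: "Suc t2 < length P" "E x (P ! t2)" "z2 = P ! Suc t2" using Xform z2 by blast
            define m where "m = p + Suc j"
            have am: "a = P ! (m - 1)" and bm: "bb = P ! m" unfolding a_def bb_def m_def by auto
            have mb: "0 < m" "p + 2 \<le> m - 1" "m < q" "m < length P"
              using bnd \<open>j \<noteq> 0\<close> ej unfolding m_def by (auto elim: evenE)
            have key: "\<And>t1 t2. t1 < t2 \<Longrightarrow> Suc t2 < length P \<Longrightarrow> E x (P ! t1) \<Longrightarrow> E x (P ! t2) \<Longrightarrow>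
               E a (P ! Suc t1) \<Longrightarrow> E bb (P ! Suc t1) \<Longrightarrow> E a (P ! Suc t2) \<Longrightarrow> E bb (P ! Suc t2) \<Longrightarrow> False"
            proof -
              fix t1 t2 assume h: "t1 < t2" "Suc t2 < length P" "E x (P ! t1)" "E x (P ! t2)"
                "E a (P ! Suc t1)" "E bb (P ! Suc t1)" "E a (P ! Suc t2)" "E bb (P ! Suc t2)"
              have s1: "t1 \<le> p \<or> q \<le> t1" using side h by simp
              have s2: "t2 \<le> p \<or> q \<le> t2" using side h by simp
              show False
              proof (cases "t2 \<le> p")
                case True
                show False
                  by (rule L.low[of t1 t2 m]) (use h True mb am bm in auto)
              next
                case f2: False
                show False
                proof (cases "q \<le> t1")
                  case True
                  show False
                    by (rule L.high[of m t1 t2]) (use h True mb am bm in auto)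
                next
                  case False
                  then have "t1 \<le> p" "q \<le> t2" using s1 s2 f2 by auto
                  then show False
                    by (intro L.mixed[of t1 m t2]) (use h mb am bm in auto)
                qed
              qed
            qed
            have "t1 \<noteq> t2" using t1 t2 z2 by auto
            then consider "t1 < t2" | "t2 < t1" by linarith
            then show False
            proof cases
              case 1 then show False using key[of t1 t2] t1 t2 z1 z2 by auto
            next
              case 2 then show False using key[of t2 t1] t1 t2 z1 z2 by auto
            qed
          qed
          then show ?thesis using False unfolding bb_def by simp
        qed
      qed
    qed
  qed
  show ?thesis
  proof (intro allI impI)
    fix j assume j: "1 \<le> j \<and> j \<le> q - p - 1"
    have eq: "nbrP E P (P ! (p + j)) \<inter> X = {w\<in>X. E (P ! (p + j)) w}"
      using XP nbr by blast
    show "(odd j \<longrightarrow> nbrP E P (P ! (p + j)) \<inter> X = {}) \<and>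
           (even j \<longrightarrow> card (nbrP E P (P ! (p + j)) \<inter> X) \<ge> k + 1)"
      using claim[of j] j unfolding eq by auto
  qed
qed

end
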